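(* Let $(W,V)$ be an independent-type $\mathcal Y$-valued transition matrix on $\mathcal X$ with $W$ irreducible and invertible, and let $P$ be a distribution on $\mathcal X$. Then $$\mathcal L^I_{2,W,V}=\big\{([W,A],0)\in\mathcal G^I:\ A\in M_d(\mathbb R),\ A^Tu_{\mathcal X}=0,\ [I_{S(V)_x},A]=0\ \forall x\in\mathcal X\big\},$$ $$\mathcal L^I_{2,P,W,V}=\big\{([W,A],0)\in\mathcal G^I:\ A\in M_d(\mathbb R),\ A^Tu_{\mathcal X}=0,\ AP=0,\ [I_{S(V)_x},A]=0\ \forall x\in\mathcal X\big\},$$ where $0$ denotes the tuple $C$ with all $C_y=0$ and $[X,Y]=XY-YX$.
   Context: Let $\mathcal X=\{1,\dots,d\}$, $\mathcal Y=\{1,\dots,d_Y\}$, $u_{\mathcal X}\in\mathbb R^{\mathcal X}$ the all-ones vector. An independent-type $\mathcal Y$-valued transition matrix $(W,V)$ consists of a column-stochastic $d\times d$ matrix $W(x|x')$ and a transition matrix $V$ from $\mathcal X$ to $\mathcal Y$ ($V(y|x')\ge0$, $\sum_yV(y|x')=1$), defining $W_y:=WD(V_y)$, where $V_y\in\mathbb R^{\mathcal X}$, $V_y(x')=V(y|x')$, and $D(v)$ is the diagonal matrix with diagonal $v$. For $x\in\mathcal X$, $V_{*,x}\in\mathbb R^{\mathcal Y}$ is $V_{*,x}(y)=V(y|x)$, $S(V)_x:=\{x'\in\mathcal X: V_{*,x'}=V_{*,x}\}$, and $I_S$ is the diagonal $0/1$ matrix projecting onto the coordinates in $S$. $\mathcal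 G^I$ is the set of pairs $(B,C)$ with $B$ a real $d\times d$ matrix vanishing wherever $W(x|x')=0$ and $C=(C_y)_{y\in\mathcal Y}$, $C_y\in\mathbb R^{\mathcal X}$, $C_y(x')=0$ wherever $V(y|x')=0$. $\mathcal L^I_{1,W,V}:=\{(B,C)\in\mathcal G^I: B^Tu_{\mathcal X}=0,\ \sum_yC_y=0\}$. Let $\mathcal L_2:=\{(W_yA-AW_y)_{y\in\mathcal Y}: A\in M_d(\mathbb R),\ A^Tu_{\mathcal X}=0\}$ and $\mathcal L_{2,P}:=\{(W_yA-AW_y)_{y}: A^Tu_{\mathcal X}=0,\ AP=0\}$. Then $\mathcal L^I_{2,W,V}:=\{(B,C)\in\mathcal L^I_{1,W,V}: (BD(V_y)+WD(C_y))_{y}\in\mathcal L_2\}$ and $\mathcal L^I_{2,P,W,V}:=\{(B,C)\in\mathcal L^I_{1,W,V}:(BD(V_y)+WD(C_y))_y\in\mathcal L_{2,P}\}$. *)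

theory Defs
  imports "HOL-Analysis.Analysis"
begin

text \<open>Conventions: the state space X is a finite type 'x, the output alphabet Y a finite
type 'y. A d x d matrix is real^'x^'x with entry M$x$x' standing for M(x|x').
The transition matrix V from X to Y is a function V :: 'y => 'x => real with
V y x' = V(y|x'). A tuple C = (C_y)_y is a function 'y => real^'x.\<close>

definition diagm :: "real^'n \<Rightarrow> real^'n^'n" where
  "diagm v = (\<chi> i j. if i = j then v $ i else 0)"

fun matpow :: "real^'n^'n \<Rightarrow> nat \<Rightarrow> real^'n^'n" where
  "matpow M 0 = mat 1"
| "matpow M (Suc k) = M ** matpow M k"

definition irreducible_mat :: "real^'n^'n \<Rightarrow> bool" where
  "irreducible_mat M \<longleftrightarrow> (\<forall>i j. \<exists>k. matpow M k $ i $ j > 0)"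

definition column_stochastic :: "real^'n^'n \<Rightarrow> bool" where
  "column_stochastic W \<longleftrightarrow> (\<forall>x x'. W $ x $ x' \<ge> 0) \<and> (\<forall>x'. (\<Sum>x\<in>UNIV. W $ x $ x') = 1)"

definition transition_to :: "('y::finite \<Rightarrow> 'x \<Rightarrow> real) \<Rightarrow> bool" where
  "transition_to V \<longleftrightarrow> (\<forall>y x'. V y x' \<ge> 0) \<and> (\<forall>x'. (\<Sum>y\<in>UNIV. V y x') = 1)"

definition distribution :: "real^'n \<Rightarrow> bool" where
  "distribution P \<longleftrightarrow> (\<forall>x. P $ x \<ge> 0) \<and> (\<Sum>x\<in>UNIV. P $ x) = 1"

definition ones :: "real^'n" where
  "ones = (\<chi> i. 1)"

definition Vvec :: "('y \<Rightarrow> 'x \<Rightarrow> real) \<Rightarrow> 'y \<Rightarrow> real^'x" where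
  "Vvec V y = (\<chi> x'. V y x')"

definition Wy :: "real^'x^'x \<Rightarrow> ('y \<Rightarrow> 'x \<Rightarrow> real) \<Rightarrow> 'y \<Rightarrow> real^'x^'x" where
  "Wy W V y = W ** diagm (Vvec V y)"

definition commutator :: "real^'n^'n \<Rightarrow> real^'n^'n \<Rightarrow> real^'n^'n" where
  "commutator X Y = X ** Y - Y ** X"

definition SV :: "('y \<Rightarrow> 'x \<Rightarrow> real) \<Rightarrow> 'x \<Rightarrow> 'x set" where
  "SV V x = {x'. \<forall>y. V y x' = V y x}"

definition proj :: "'x set \<Rightarrow> real^'x^'x" where
  "proj S = diagm (\<chi> i. if i \<in> S then 1 else 0)"

definition GI :: "real^'x^'x \<Rightarrow> ('y \<Rightarrow> 'x \<Rightarrow> real)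
    \<Rightarrow> ((real^'x^'x) \<times> ('y \<Rightarrow> real^'x)) set" where
  "GI W V = {(B, C). (\<forall>x x'. W $ x $ x' = 0 \<longrightarrow> B $ x $ x' = 0)
                   \<and> (\<forall>y x'. V y x' = 0 \<longrightarrow> C y $ x' = 0)}"

definition L1I :: "real^'x^'x \<Rightarrow> ('y::finite \<Rightarrow> 'x \<Rightarrow> real)
    \<Rightarrow> ((real^'x^'x) \<times> ('y \<Rightarrow> real^'x)) set" where
  "L1I W V = {(B, C) \<in> GI W V. transpose B *v ones = 0 \<and> (\<Sum>y\<in>UNIV. C y) = 0}"

definition L2 :: "real^'x^'x \<Rightarrow> ('y \<Rightarrow> 'x \<Rightarrow> real) \<Rightarrow> ('y \<Rightarrow> real^'x^'x) set" where
  "L2 W V = {(\<lambda>y. Wy W V y ** A - A ** Wy W V y) | A. transpose A *v ones = 0}"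

definition L2P :: "real^'x \<Rightarrow> real^'x^'x \<Rightarrow> ('y \<Rightarrow> 'x \<Rightarrow> real) \<Rightarrow> ('y \<Rightarrow> real^'x^'x) set" where
  "L2P P W V = {(\<lambda>y. Wy W V y ** A - A ** Wy W V y) | A. transpose A *v ones = 0 \<and> A *v P = 0}"

definition L2I :: "real^'x^'x \<Rightarrow> ('y::finite \<Rightarrow> 'x \<Rightarrow> real)
    \<Rightarrow> ((real^'x^'x) \<times> ('y \<Rightarrow> real^'x)) set" where
  "L2I W V = {(B, C) \<in> L1I W V.
      (\<lambda>y. B ** diagm (Vvec V y) + W ** diagm (C y)) \<in> L2 W V}"

definition L2PI :: "real^'x \<Rightarrow> real^'x^'x \<Rightarrow> ('y::finite \<Rightarrow> 'x \<Rightarrow> real)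
    \<Rightarrow> ((real^'x^'x) \<times> ('y \<Rightarrow> real^'x)) set" where
  "L2PI P W V = {(B, C) \<in> L1I W V.
      (\<lambda>y. B ** diagm (Vvec V y) + W ** diagm (C y)) \<in> L2P P W V}"

end

theory Submission
  imports Defs
begin

lemma mm_sub_l: "(A::real^'n^'m) ** (B - C) = A ** B - A ** C"
  by (vector matrix_matrix_mult_def sum_subtractf right_diff_distrib)
lemma mm_sub_r: "((A::real^'n^'m) - B) ** C = A ** C - B ** C"
  by (vector matrix_matrix_mult_def sum_subtractf left_diff_distrib)
lemma mm_add_r: "((A::real^'n^'m) + B) ** C = A ** C + B ** C"
  by (vector matrix_matrix_mult_def sum.distrib distrib_right)

lemma mm_sum_l: "finite S \<Longrightarrow> (M::real^'n^'m) ** sum f S = sum (\<lambda>x. M ** f x) S"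
  by (induction S rule: finite_induct) (auto simp: matrix_add_ldistrib)

lemma mm_sum_r: "finite S \<Longrightarrow> sum f S ** (M::real^'n^'m) = sum (\<lambda>x. f x ** M) S"
  by (induction S rule: finite_induct) (auto simp: mm_add_r)

lemma mul_diag: "((M::real^'n^'n) ** diagm v) $ i $ j = M $ i $ j * v $ j"
  by (simp add: matrix_matrix_mult_def diagm_def if_distrib if_distribR cong: if_cong)
lemma diag_mul: "(diagm v ** (M::real^'n^'n)) $ i $ j = v $ i * M $ i $ j"
  by (simp add: matrix_matrix_mult_def diagm_def if_distrib if_distribR cong: if_cong)

lemma diagm_0: "diagm (0::real^'n) = 0"
  by (simp add: diagm_def vec_eq_iff)

lemma diagm_sum: "finite S \<Longrightarrow> sum (\<lambda>y. diagm (f y)) S = diagm (sum f S :: real^'n)"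
  by (induction S rule: finite_induct) (auto simp: diagm_def vec_eq_iff diagm_0)

lemma comm_proj_char:
  "(\<forall>x. commutator (proj (SV V x)) (A::real^'x^'x) = 0)
    \<longleftrightarrow> (\<forall>i j. A$i$j \<noteq> 0 \<longrightarrow> (\<forall>y. V y i = V y j))"
proof
  assume h: "\<forall>x. commutator (proj (SV V x)) A = 0"
  show "\<forall>i j. A$i$j \<noteq> 0 \<longrightarrow> (\<forall>y. V y i = V y j)"
  proof (intro allI impI)
    fix i j y assume a: "A$i$j \<noteq> 0"
    have "commutator (proj (SV V j)) A $ i $ j = 0" using h by simp
    hence "(if i \<in> SV V j then 1 else 0) * A$i$j - A$i$j * 1 = 0"
      by (simp add: commutator_def proj_def mul_diag diag_mul SV_def)
    hence "i \<in> SV V j" using a by (auto split: if_splits)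
    thus "V y i = V y j" by (simp add: SV_def)
  qed
next
  assume h: "\<forall>i j. A$i$j \<noteq> 0 \<longrightarrow> (\<forall>y. V y i = V y j)"
  show "\<forall>x. commutator (proj (SV V x)) A = 0"
  proof (intro allI)
    fix x
    show "commutator (proj (SV V x)) A = 0"
    proof (subst vec_eq_iff, intro allI, subst vec_eq_iff, intro allI)
      fix i j
      show "commutator (proj (SV V x)) A $ i $ j = 0 $ i $ j"
      proof (cases "A$i$j = 0")
        case True thus ?thesis by (simp add: commutator_def proj_def mul_diag diag_mul)
      next
        case False
        hence "\<forall>y. V y i = V y j" using h by blast
        hence "(i \<in> SV V x) = (j \<in> SV V x)" by (simp add: SV_def)
        thus ?thesis by (simp add: commutator_def proj_def mul_diag diag_mul)
      qed
    qed
  qed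
qed

lemma comm_diag:
  assumes "\<forall>i j. A$i$j \<noteq> 0 \<longrightarrow> (\<forall>y. V y i = V y j)"
  shows "(A::real^'x^'x) ** diagm (Vvec V y) = diagm (Vvec V y) ** A"
  unfolding vec_eq_iff mul_diag diag_mul
  using assms by (auto simp: Vvec_def) (metis mult.commute)

lemma main:
  fixes W :: "real^'x::finite^'x" and V :: "'y::finite \<Rightarrow> 'x \<Rightarrow> real" and B A
  and C :: "'y \<Rightarrow> real^'x"
  assumes cs: "column_stochastic W" and tr: "transition_to V" and inv: "invertible W"
    and sC: "(\<Sum>y\<in>UNIV. C y) = 0"
    and h: "\<forall>y. B ** diagm (Vvec V y) + W ** diagm (C y) = Wy W V y ** A - A ** Wy W V y"
  shows "B = commutator W A" "C = (\<lambda>y. 0)" "\<forall>i j. A$i$j \<noteq> 0 \<longrightarrow> (\<forall>y. V y i = V y j)"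
proof -
  define D where "D y = diagm (Vvec V y)" for y
  have sD: "(\<Sum>y\<in>UNIV. D y) = mat 1"
    using tr unfolding D_def diagm_sum[OF finite]
    by (auto simp: transition_to_def diagm_def mat_def vec_eq_iff Vvec_def)
  have sDC: "(\<Sum>y\<in>UNIV. W ** diagm (C y)) = 0"
    by (simp add: mm_sum_l[symmetric] diagm_sum sC diagm_0)
  have h': "\<And>y. B ** D y + W ** diagm (C y) = W ** D y ** A - A ** W ** D y"
    using h by (simp add: D_def Wy_def matrix_mul_assoc)
  have "(\<Sum>y\<in>UNIV. B ** D y + W ** diagm (C y)) = (\<Sum>y\<in>UNIV. W ** D y ** A - A ** W ** D y)"
    using h' by simp
  hence "B ** (\<Sum>y\<in>UNIV. D y) + 0 = W ** (\<Sum>y\<in>UNIV. D y) ** A - A ** W ** (\<Sum>y\<in>UNIV. D y)"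
    by (simp add: sum.distrib sDC sum_subtractf mm_sum_l mm_sum_r matrix_mul_assoc)
  hence B: "B = commutator W A" by (simp add: sD commutator_def)
  thus "B = commutator W A" .
  obtain Wi where Wi: "Wi ** W = mat 1" using inv invertible_left_inverse by blast
  have E: "A ** D y - D y ** A + diagm (C y) = 0" for y
  proof -
    have "W ** A ** D y - A ** W ** D y + W ** diagm (C y) = W ** D y ** A - A ** W ** D y"
      using h'[of y] B by (simp add: commutator_def mm_sub_r)
    hence "W ** (A ** D y - D y ** A + diagm (C y)) = 0"
      by (simp add: matrix_add_ldistrib mm_sub_l matrix_mul_assoc algebra_simps)
    hence "Wi ** (W ** (A ** D y - D y ** A + diagm (C y))) = 0" by simp
    thus ?thesis by (simp add: matrix_mul_assoc Wi)
  qed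
  have Ce: "C y $ j = 0" for y j
  proof -
    have "(A ** D y - D y ** A + diagm (C y)) $ j $ j = 0" using E by simp
    thus ?thesis by (simp add: D_def mul_diag diag_mul) (simp add: diagm_def)
  qed
  thus "C = (\<lambda>y. 0)" by (auto simp: vec_eq_iff)
  show "\<forall>i j. A$i$j \<noteq> 0 \<longrightarrow> (\<forall>y. V y i = V y j)"
  proof (intro allI impI)
    fix i j y assume a: "A$i$j \<noteq> 0"
    have z: "(A ** D y - D y ** A + diagm (C y)) $ i $ j = 0" using E by simp
    have ent: "(A ** D y - D y ** A + diagm (C y)) $ i $ j
       = A$i$j * V y j - V y i * A$i$j + (if i = j then C y $ i else 0)"
      by (simp add: D_def mul_diag diag_mul) (simp add: diagm_def Vvec_def)
    have e: "A$i$j * V y j - V y i * A$i$j + (if i = j then C y $ i else 0) = 0"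
      using z unfolding ent .
    have "(if i = j then C y $ i else 0) = 0" using Ce by simp
    with e have "A$i$j * V y j - V y i * A$i$j = 0" by linarith
    hence "A$i$j * (V y j - V y i) = 0" by (simp add: right_diff_distrib mult.commute)
    thus "V y i = V y j" using a by simp
  qed
qed

lemma transp_comm:
  assumes cs: "column_stochastic (W::real^'x::finite^'x)" and A: "transpose A *v ones = 0"
  shows "transpose (commutator W A) *v ones = 0"
proof -
  have Wt: "transpose W *v ones = ones"
    using cs by (simp add: column_stochastic_def vec_eq_iff matrix_vector_mult_def transpose_def ones_def)
  have "transpose (commutator W A) = transpose A ** transpose W - transpose W ** transpose A"
    by (simp add: commutator_def matrix_transpose_mul[symmetric]) (simp add: transpose_def vec_eq_iff)
  hence "transpose (commutator W A) *v ones
     = (transpose A ** transpose W) *v ones - (transpose W ** transpose A) *v ones"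
    by (simp only: matrix_vector_mult_diff_rdistrib)
  also have "\<dots> = transpose A *v (transpose W *v ones) - transpose W *v (transpose A *v ones)"
    by (simp only: matrix_vector_mul_assoc)
  also have "\<dots> = 0" by (simp only: Wt A matrix_vector_mult_0_right) simp
  finally show ?thesis .
qed

lemma backw:
  fixes W :: "real^'x::finite^'x" and V :: "'y::finite \<Rightarrow> 'x \<Rightarrow> real"
  assumes c: "\<forall>i j. A$i$j \<noteq> 0 \<longrightarrow> (\<forall>y. V y i = V y j)"
  shows "(\<lambda>y. commutator W A ** diagm (Vvec V y) + W ** diagm ((\<lambda>y. 0::real^'x) y))
       = (\<lambda>y. Wy W V y ** A - A ** Wy W V y)"
proof
  fix y
  have "A ** diagm (Vvec V y) = diagm (Vvec V y) ** A" using comm_diag[OF c] .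
  thus "commutator W A ** diagm (Vvec V y) + W ** diagm ((\<lambda>y. 0::real^'x) y)
       = Wy W V y ** A - A ** Wy W V y"
    by (simp add: commutator_def Wy_def diagm_0 mm_sub_r matrix_mul_assoc[symmetric])
qed

lemma dir0:
  fixes W :: "real^'x::finite^'x" and V :: "'y::finite \<Rightarrow> 'x \<Rightarrow> real" and P :: "real^'x"
  assumes "column_stochastic W" and "transition_to V"
    and "irreducible_mat W" and "invertible W"
    and "distribution P"
    and m: "BC \<in> L2I W V"
  shows "BC \<in> {(commutator W A, (\<lambda>y. 0)) | A. transpose A *v ones = 0
                       \<and> (\<forall>x. commutator (proj (SV V x)) A = 0)} \<inter> GI W V"
proof -
  obtain B C where BC: "BC = (B, C)" by fastforce
  from m have m': "(B, C) \<in> L1I W V" "(\<lambda>y. B ** diagm (Vvec V y) + W ** diagm (C y)) \<in> L2 W V"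
    unfolding BC L2I_def by blast+
  from m'(1) have g: "(B, C) \<in> GI W V" and sC: "(\<Sum>y\<in>UNIV. C y) = 0"
    unfolding L1I_def by blast+
  from m'(2) obtain A where At: "transpose A *v ones = 0"
    and h: "(\<lambda>y. B ** diagm (Vvec V y) + W ** diagm (C y)) = (\<lambda>y. Wy W V y ** A - A ** Wy W V y)"
    unfolding L2_def by blast
  have h': "\<forall>y. B ** diagm (Vvec V y) + W ** diagm (C y) = Wy W V y ** A - A ** Wy W V y"
    using h by meson
  note r = main[OF assms(1,2,4) sC h']
  have c: "\<forall>x. commutator (proj (SV V x)) A = 0" using comm_proj_char[of V A] r(3) by blast
  show ?thesis
    unfolding BC using g At c r(1,2) by blast
qed

lemma dir1:
  fixes W :: "real^'x::finite^'x" and V :: "'y::finite \<Rightarrow> 'x \<Rightarrow> real" and P :: "real^'x"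
  assumes "column_stochastic W" and "transition_to V"
    and "irreducible_mat W" and "invertible W"
    and "distribution P"
    and m: "BC \<in> L2PI P W V"
  shows "BC \<in> {(commutator W A, (\<lambda>y. 0)) | A. transpose A *v ones = 0 \<and> A *v P = 0
                       \<and> (\<forall>x. commutator (proj (SV V x)) A = 0)} \<inter> GI W V"
proof -
  obtain B C where BC: "BC = (B, C)" by fastforce
  from m have m': "(B, C) \<in> L1I W V" "(\<lambda>y. B ** diagm (Vvec V y) + W ** diagm (C y)) \<in> L2P P W V"
    unfolding BC L2PI_def by blast+
  from m'(1) have g: "(B, C) \<in> GI W V" and sC: "(\<Sum>y\<in>UNIV. C y) = 0"
    unfolding L1I_def by blast+
  from m'(2) obtain A where At: "transpose A *v ones = 0" and AP: "A *v P = 0"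
    and h: "(\<lambda>y. B ** diagm (Vvec V y) + W ** diagm (C y)) = (\<lambda>y. Wy W V y ** A - A ** Wy W V y)"
    unfolding L2P_def by blast
  have h': "\<forall>y. B ** diagm (Vvec V y) + W ** diagm (C y) = Wy W V y ** A - A ** Wy W V y"
    using h by meson
  note r = main[OF assms(1,2,4) sC h']
  have c: "\<forall>x. commutator (proj (SV V x)) A = 0" using comm_proj_char[of V A] r(3) by blast
  show ?thesis
    unfolding BC using g At AP c r(1,2) by blast
qed

lemma dir2:
  fixes W :: "real^'x::finite^'x" and V :: "'y::finite \<Rightarrow> 'x \<Rightarrow> real" and P :: "real^'x"
  assumes "column_stochastic W" and "transition_to V"
    and "irreducible_mat W" and "invertible W"
    and "distribution P"
    and m: "BC \<in> {(commutator W A, (\<lambda>y. 0)) | A. transpose A *v ones = 0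
                       \<and> (\<forall>x. commutator (proj (SV V x)) A = 0)} \<inter> GI W V"
  shows "BC \<in> L2I W V"
proof -
  from m obtain A where BC: "BC = (commutator W A, (\<lambda>y. 0))" and At: "transpose A *v ones = 0"
    and c: "\<forall>x. commutator (proj (SV V x)) A = 0" and g: "BC \<in> GI W V" by blast
  have c': "\<forall>i j. A$i$j \<noteq> 0 \<longrightarrow> (\<forall>y. V y i = V y j)" using comm_proj_char[THEN iffD1, OF c] .
  have L1: "(commutator W A, (\<lambda>y. 0::real^'x)) \<in> L1I W V"
    unfolding L1I_def using g BC transp_comm[OF assms(1) At] by simp
  have L2m: "(\<lambda>y. commutator W A ** diagm (Vvec V y) + W ** diagm ((\<lambda>y. 0::real^'x) y)) \<in> L2 W V"
    unfolding L2_def mem_Collect_eq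
    by (rule exI[of _ A], rule conjI, rule backw[OF c'], rule At)
  show ?thesis
    unfolding L2I_def BC using L1 L2m by simp
qed

lemma dir3:
  fixes W :: "real^'x::finite^'x" and V :: "'y::finite \<Rightarrow> 'x \<Rightarrow> real" and P :: "real^'x"
  assumes "column_stochastic W" and "transition_to V"
    and "irreducible_mat W" and "invertible W"
    and "distribution P"
    and m: "BC \<in> {(commutator W A, (\<lambda>y. 0)) | A. transpose A *v ones = 0 \<and> A *v P = 0
                       \<and> (\<forall>x. commutator (proj (SV V x)) A = 0)} \<inter> GI W V"
  shows "BC \<in> L2PI P W V"
proof -
  from m obtain A where BC: "BC = (commutator W A, (\<lambda>y. 0))" and At: "transpose A *v ones = 0"
    and AP: "A *v P = 0"
    and c: "\<forall>x. commutator (proj (SV V x)) A = 0" and g: "BC \<in> GI W V" by blast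
  have c': "\<forall>i j. A$i$j \<noteq> 0 \<longrightarrow> (\<forall>y. V y i = V y j)" using comm_proj_char[THEN iffD1, OF c] .
  have L1: "(commutator W A, (\<lambda>y. 0::real^'x)) \<in> L1I W V"
    unfolding L1I_def using g BC transp_comm[OF assms(1) At] by simp
  have L2m: "(\<lambda>y. commutator W A ** diagm (Vvec V y) + W ** diagm ((\<lambda>y. 0::real^'x) y)) \<in> L2P P W V"
    unfolding L2P_def mem_Collect_eq
    by (rule exI[of _ A], intro conjI, rule backw[OF c'], rule At, rule AP)
  show ?thesis
    unfolding L2PI_def BC using L1 L2m by simp
qed

theorem corollary2:
  fixes W :: "real^'x::finite^'x" and V :: "'y::finite \<Rightarrow> 'x \<Rightarrow> real" and P :: "real^'x"
  assumes "column_stochastic W" and "transition_to V"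
    and "irreducible_mat W" and "invertible W"
    and "distribution P"
  shows "(L2I W V = {(commutator W A, (\<lambda>y. 0)) | A. transpose A *v ones = 0
                       \<and> (\<forall>x. commutator (proj (SV V x)) A = 0)} \<inter> GI W V)
    \<and> (L2PI P W V = {(commutator W A, (\<lambda>y. 0)) | A. transpose A *v ones = 0 \<and> A *v P = 0
                       \<and> (\<forall>x. commutator (proj (SV V x)) A = 0)} \<inter> GI W V)"
  by (intro conjI set_eqI iffI) (erule dir0[OF assms] dir1[OF assms] dir2[OF assms] dir3[OF assms])+

end
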